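(* Let $w_0\in\mathbb{R}^p$ be such that for every hidden neuron $(l,i)$ ($1\le l\le L$, $1\le i\le n_l$) the function $x\mapsto z_l(x;w_0)_i$ does not vanish identically on any nonempty open subset of $\mathbb{R}^{n_0}$. Then the set $Z=\bigcup_{l=1}^{L}\bigcup_{i=1}^{n_l}\{x\in\mathbb{R}^{n_0}: z_l(x;w_0)_i=0\}$ has Lebesgue measure zero in $\mathbb{R}^{n_0}$.
   Context: A ReLU multilayer perceptron (MLP) with $L$ hidden layers and widths $n_0,n_1,\dots,n_L,n_{L+1}$ has parameters $w=(W_0,b_0,W_1,b_1,\dots,W_L,b_L)\in\mathbb{R}^p$ with $W_l\in\mathbb{R}^{n_{l+1}\times n_l}$, $b_l\in\mathbb{R}^{n_{l+1}}$ (all entries concatenated into one vector of length $p$). For $x\in\mathbb{R}^{n_0}$ set $h_0(x;w)=x$ and for $l=1,\dots,L$ define the pre-activations $z_l(x;w)=W_{l-1}h_{l-1}(x;w)+b_{l-1}\in\mathbb{R}^{n_l}$ and activations $h_l(x;w)=\sigma(z_l(x;w))$, where $\sigma(t)=\max(t,0)$ is applied elementwise; the output is $f(x;w)=W_Lh_L(x;w)+b_L$. *)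

theory Defs
  imports "HOL-Analysis.Analysis"
begin

text \<open>The input space R^{n_0} is the type real^'n,
  so n_0 = CARD('n).  The parameters are:
   W0 i j  (i < n_1, j :: 'n)   -- entries of W_0;
   W l i j (1 \<le> l \<le> L, i < n_{l+1}, j < n_l) -- entries of W_l;
   b l i   (0 \<le> l \<le> L, i < n_{l+1})      -- entries of b_l.
  Hidden neurons are indexed from 0: neuron (l,i) with i < n l.
  mlp_pre n W0 W b l x i = z_l(x;w)_i for 1 \<le> l.\<close>

fun mlp_pre :: "(nat \<Rightarrow> nat) \<Rightarrow> (nat \<Rightarrow> 'n::finite \<Rightarrow> real) \<Rightarrow> (nat \<Rightarrow> nat \<Rightarrow> nat \<Rightarrow> real)
      \<Rightarrow> (nat \<Rightarrow> nat \<Rightarrow> real) \<Rightarrow> nat \<Rightarrow> real^'n \<Rightarrow> nat \<Rightarrow> real" where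
  "mlp_pre n W0 W b 0 x i = 0"
| "mlp_pre n W0 W b (Suc 0) x i = (\<Sum>j\<in>UNIV. W0 i j * x $ j) + b 0 i"
| "mlp_pre n W0 W b (Suc (Suc l)) x i =
     (\<Sum>j<n (Suc l). W (Suc l) i j * max (mlp_pre n W0 W b (Suc l) x j) 0) + b (Suc l) i"

end

theory Submission
  imports Defs
begin

definition PA :: "(real^'n::finite \<Rightarrow> real) \<Rightarrow> bool" where
  "PA f \<longleftrightarrow> (\<exists>F. finite F \<and> (\<forall>x. \<exists>p\<in>F. f x = fst p \<bullet> x + snd p))"

lemma PA_affine: "PA (\<lambda>x. a \<bullet> x + c)"
  unfolding PA_def by (rule exI[of _ "{(a,c)}"]) auto

lemma PA_add: assumes "PA f" "PA g" shows "PA (\<lambda>x. f x + g x)"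
proof -
  obtain F where F: "finite F" "\<forall>x. \<exists>p\<in>F. f x = fst p \<bullet> x + snd p" using assms(1) PA_def by blast
  obtain G where G: "finite G" "\<forall>x. \<exists>p\<in>G. g x = fst p \<bullet> x + snd p" using assms(2) PA_def by blast
  let ?H = "(\<lambda>(p,q). (fst p + fst q, snd p + snd q)) ` (F \<times> G)"
  have "finite ?H" using F G by auto
  moreover have "\<forall>x. \<exists>r\<in>?H. f x + g x = fst r \<bullet> x + snd r"
  proof
    fix x
    obtain p where p: "p \<in> F" "f x = fst p \<bullet> x + snd p" using F by blast
    obtain q where q: "q \<in> G" "g x = fst q \<bullet> x + snd q" using G by blast
    show "\<exists>r\<in>?H. f x + g x = fst r \<bullet> x + snd r"
      by (rule bexI[of _ "(fst p + fst q, snd p + snd q)"]) (use p q in \<open>auto simp: inner_add_left\<close>)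
  qed
  ultimately show ?thesis unfolding PA_def by blast
qed

lemma PA_scale: assumes "PA f" shows "PA (\<lambda>x. c * f x)"
proof -
  obtain F where F: "finite F" "\<forall>x. \<exists>p\<in>F. f x = fst p \<bullet> x + snd p" using assms(1) PA_def by blast
  let ?H = "(\<lambda>p. (c *\<^sub>R fst p, c * snd p)) ` F"
  have "\<forall>x. \<exists>r\<in>?H. c * f x = fst r \<bullet> x + snd r"
  proof
    fix x
    obtain p where p: "p \<in> F" "f x = fst p \<bullet> x + snd p" using F by blast
    show "\<exists>r\<in>?H. c * f x = fst r \<bullet> x + snd r"
      by (rule bexI[of _ "(c *\<^sub>R fst p, c * snd p)"]) (use p in \<open>auto simp: algebra_simps\<close>)
  qed
  then show ?thesis unfolding PA_def using F by blast
qed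

lemma PA_max: assumes "PA f" shows "PA (\<lambda>x. max (f x) 0)"
proof -
  obtain F where F: "finite F" "\<forall>x. \<exists>p\<in>F. f x = fst p \<bullet> x + snd p" using assms(1) PA_def by blast
  have "\<forall>x. \<exists>r\<in>insert (0,0) F. max (f x) 0 = fst r \<bullet> x + snd r"
  proof
    fix x
    show "\<exists>r\<in>insert (0,0) F. max (f x) 0 = fst r \<bullet> x + snd r"
    proof (cases "f x \<ge> 0")
      case True then show ?thesis using F(2) by (metis insertI2 max.absorb1)
    qed auto
  qed
  then show ?thesis unfolding PA_def using F by blast
qed

lemma PA_sum: assumes "finite S" "\<And>j. j \<in> S \<Longrightarrow> PA (f j)" shows "PA (\<lambda>x. \<Sum>j\<in>S. f j x)"
  using assms
proof (induction S rule: finite_induct)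
  case empty
  then show ?case using PA_affine[of 0 0] by simp
next
  case (insert a S)
  then show ?case by (simp add: PA_add)
qed

lemma mlp_PA_cont:
  "PA (\<lambda>x. mlp_pre n W0 W b (Suc l) x i) \<and> continuous_on UNIV (\<lambda>x. mlp_pre n W0 W b (Suc l) x i)"
proof (induction l arbitrary: i)
  case 0
  have e: "(\<lambda>x. mlp_pre n W0 W b (Suc 0) x i) = (\<lambda>x. (\<chi> j. W0 i j) \<bullet> x + b 0 i)"
    by (auto simp: inner_vec_def)
  have "continuous_on UNIV (\<lambda>x. (\<chi> j. W0 i j) \<bullet> x + b 0 i)"
    by (intro continuous_intros)
  then show ?case unfolding e using PA_affine by blast
next
  case (Suc l)
  have "PA (\<lambda>x. mlp_pre n W0 W b (Suc (Suc l)) x i)"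
    unfolding mlp_pre.simps
    by (intro PA_add PA_sum PA_scale PA_max) (auto simp: Suc.IH intro: PA_affine[of 0, simplified])
  moreover have "continuous_on UNIV (\<lambda>x. mlp_pre n W0 W b (Suc (Suc l)) x i)"
    unfolding mlp_pre.simps using Suc.IH by (intro continuous_intros) auto
  ultimately show ?case by blast
qed

lemma zero_set_negligible:
  fixes f :: "real^'n::finite \<Rightarrow> real"
  assumes "PA f" "continuous_on UNIV f"
    and hyp: "\<forall>U. open U \<and> U \<noteq> {} \<longrightarrow> \<not> (\<forall>x\<in>U. f x = 0)"
  shows "negligible {x. f x = 0}"
proof -
  obtain F where F: "finite F" "\<forall>x. \<exists>p\<in>F. f x = fst p \<bullet> x + snd p" using assms(1) PA_def by blast
  let ?F' = "F - {(0,0)}"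
  have sub: "{x. f x = 0} \<subseteq> \<Union>((\<lambda>p. {x. fst p \<bullet> x = - snd p}) ` ?F')"
  proof
    fix x assume x: "x \<in> {x. f x = 0}"
    show "x \<in> \<Union>((\<lambda>p. {x. fst p \<bullet> x = - snd p}) ` ?F')"
    proof (rule ccontr)
      assume nx: "x \<notin> \<Union>((\<lambda>p. {x. fst p \<bullet> x = - snd p}) ` ?F')"
      define V where "V = (\<Inter>p\<in>?F'. {y. f y \<noteq> fst p \<bullet> y + snd p})"
      have "open V" unfolding V_def using F(1) assms(2)
      proof (intro open_INT ballI)
        fix p assume "p \<in> ?F'"
        show "open {y. f y \<noteq> fst p \<bullet> y + snd p}"
          by (rule open_Collect_neq[OF assms(2)]) (intro continuous_intros)
      qed simp
      moreover have "x \<in> V" unfolding V_def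
      proof
        fix p assume "p \<in> ?F'"
        then have "fst p \<bullet> x \<noteq> - snd p" using nx by blast
        then show "x \<in> {y. f y \<noteq> fst p \<bullet> y + snd p}" using x by auto
      qed
      moreover have "\<forall>y\<in>V. f y = 0"
      proof
        fix y assume "y \<in> V"
        obtain p where p: "p \<in> F" "f y = fst p \<bullet> y + snd p" using F by blast
        then have "p = (0,0)" using \<open>y \<in> V\<close> unfolding V_def by auto
        then show "f y = 0" using p by simp
      qed
      ultimately show False using hyp by blast
    qed
  qed
  have "negligible (\<Union>((\<lambda>p. {x. fst p \<bullet> x = - snd p}) ` ?F'))"
  proof (rule negligible_Union)
    show "finite ((\<lambda>p. {x. fst p \<bullet> x = - snd p}) ` ?F')" using F by auto
  next
    fix T assume "T \<in> (\<lambda>p. {x. fst p \<bullet> x = - snd p}) ` ?F'"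
    then obtain p where "p \<in> ?F'" "T = {x. fst p \<bullet> x = - snd p}" by blast
    moreover have "fst p \<noteq> 0 \<or> - snd p \<noteq> 0" using \<open>p \<in> ?F'\<close> by (cases p) auto
    ultimately show "negligible T" using negligible_hyperplane by blast
  qed
  then show ?thesis using sub negligible_subset by blast
qed

theorem mainTheorem3:
  fixes n :: "nat \<Rightarrow> nat" and L :: nat
    and W0 :: "nat \<Rightarrow> 'n::finite \<Rightarrow> real"
    and W :: "nat \<Rightarrow> nat \<Rightarrow> nat \<Rightarrow> real" and b :: "nat \<Rightarrow> nat \<Rightarrow> real"
  assumes "n 0 = CARD('n)"
    and "\<forall>l\<in>{1..L}. \<forall>i<n l. \<forall>U::(real^'n) set. open U \<and> U \<noteq> {} \<longrightarrow>
           \<not> (\<forall>x\<in>U. mlp_pre n W0 W b l x i = 0)"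
  shows "(\<Union>l\<in>{1..L}. \<Union>i\<in>{..<n l}. {x::real^'n. mlp_pre n W0 W b l x i = 0}) \<in> null_sets lborel"
proof -
  let ?S = "(\<Union>l\<in>{1..L}. \<Union>i\<in>{..<n l}. {x::real^'n. mlp_pre n W0 W b l x i = 0})"
  have cont: "continuous_on UNIV (\<lambda>x. mlp_pre n W0 W b l x i)" if "l \<in> {1..L}" for l i
    using that mlp_PA_cont[of n W0 W b "l - 1" i] by (cases l) auto
  have pa: "PA (\<lambda>x. mlp_pre n W0 W b l x i)" if "l \<in> {1..L}" for l i
    using that mlp_PA_cont[of n W0 W b "l - 1" i] by (cases l) auto
  have neg: "negligible ?S"
  proof (intro negligible_Union finite_imageI ballI finite_atLeastAtMost finite_lessThan)
    fix T assume "T \<in> (\<lambda>l. \<Union>i\<in>{..<n l}. {x::real^'n. mlp_pre n W0 W b l x i = 0}) ` {1..L}"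
    then obtain l where l: "l \<in> {1..L}" "T = (\<Union>i\<in>{..<n l}. {x::real^'n. mlp_pre n W0 W b l x i = 0})" by blast
    show "negligible T" unfolding l(2)
    proof (intro negligible_Union finite_imageI ballI finite_lessThan)
      fix T' assume "T' \<in> (\<lambda>i. {x::real^'n. mlp_pre n W0 W b l x i = 0}) ` {..<n l}"
      then obtain i where i: "i < n l" "T' = {x::real^'n. mlp_pre n W0 W b l x i = 0}" by blast
      show "negligible T'" unfolding i(2)
        using assms(2) l(1) i(1) by (intro zero_set_negligible pa cont) auto
    qed
  qed
  have cl: "closed ?S"
  proof (intro closed_UN finite_atLeastAtMost finite_lessThan ballI)
    fix l i assume "l \<in> {1..L}"
    then show "closed {x::real^'n. mlp_pre n W0 W b l x i = 0}"
      by (intro closed_Collect_eq cont continuous_intros)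
  qed
  then have "?S \<in> sets lborel" by simp
  moreover have "?S \<in> null_sets lebesgue" using neg negligible_iff_null_sets by blast
  ultimately show ?thesis using null_sets_completion_iff by blast
qed

end
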